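(* Any quantum algorithm that solves the metric estimation problem on $n$ points with an approximation factor smaller than $3$ needs to make at least $\Omega(n^2)$ oracle calls.
   Context: Metric estimation: input is a metric space $\langle \mathcal{M},d\rangle$ with $\mathcal{M}=\{p_1,\dots,p_n\}$, accessible only via an oracle that on input $(i,j)$ returns $d(p_i,p_j)$. The output, with approximation factor $\alpha>1$, is an $n\times n$ matrix $A$ with $d(p_i,p_j)\le A[i][j]\le \alpha\, d(p_i,p_j)$ for all $1\le i,j\le n$. The complexity measure is the number of (quantum) oracle queries. *)

theory Defs
  imports "Jordan_Normal_Form.Matrix"
begin

text \<open>Finite metrics on the index set {0..<n} with natural-number distances below M
  (M is the size of the oracle's answer register).  Points are distinct, so distances
  between different indices are positive.\<close>
definition is_nat_metric :: "nat \<Rightarrow> nat \<Rightarrow> (nat \<Rightarrow> nat \<Rightarrow> nat) \<Rightarrow> bool" where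
  "is_nat_metric n M d \<longleftrightarrow>
     (\<forall>i<n. d i i = 0) \<and>
     (\<forall>i<n. \<forall>j<n. i \<noteq> j \<longrightarrow> 0 < d i j) \<and>
     (\<forall>i<n. \<forall>j<n. d i j = d j i) \<and>
     (\<forall>i<n. \<forall>j<n. \<forall>k<n. d i k \<le> d i j + d j k) \<and>
     (\<forall>i<n. \<forall>j<n. d i j < M)"

text \<open>Computational basis of C^(n*n*M*m): registers |i,j> (query), |a> (answer, in Z_M),
  |w> (workspace of dimension m).\<close>
definition qidx :: "nat \<Rightarrow> nat \<Rightarrow> nat \<Rightarrow> nat \<Rightarrow> nat \<Rightarrow> nat \<Rightarrow> nat \<Rightarrow> nat" where
  "qidx n M m i j a w = ((i * n + j) * M + a) * m + w"

definition qdim :: "nat \<Rightarrow> nat \<Rightarrow> nat \<Rightarrow> nat" where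
  "qdim n M m = n * n * M * m"

text \<open>Standard oracle: |i,j,a,w> \<mapsto> |i,j,(a + d(i,j)) mod M, w>.\<close>
definition oracle_mat :: "nat \<Rightarrow> nat \<Rightarrow> nat \<Rightarrow> (nat \<Rightarrow> nat \<Rightarrow> nat) \<Rightarrow> complex mat" where
  "oracle_mat n M m d = mat (qdim n M m) (qdim n M m) (\<lambda>(r, c).
      if \<exists>i j a w. i < n \<and> j < n \<and> a < M \<and> w < m \<and>
                   c = qidx n M m i j a w \<and> r = qidx n M m i j ((a + d i j) mod M) w
      then 1 else 0)"

definition adjoint_mat :: "complex mat \<Rightarrow> complex mat" where
  "adjoint_mat U = mat (dim_col U) (dim_row U) (\<lambda>(i, j). cnj (U $$ (j, i)))"

definition unitary_of_dim :: "nat \<Rightarrow> complex mat \<Rightarrow> bool" where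
  "unitary_of_dim D U \<longleftrightarrow> U \<in> carrier_mat D D \<and> adjoint_mat U * U = 1\<^sub>m D"

text \<open>Run: start in |0>, apply U0, then for every U in Us apply the oracle followed by U.
  The number of oracle queries is length Us.\<close>
fun run_after :: "complex mat \<Rightarrow> complex mat list \<Rightarrow> complex vec \<Rightarrow> complex vec" where
  "run_after Q [] v = v"
| "run_after Q (U # Us) v = run_after Q Us (U *\<^sub>v (Q *\<^sub>v v))"

definition final_state ::
  "nat \<Rightarrow> nat \<Rightarrow> nat \<Rightarrow> complex mat \<Rightarrow> complex mat list \<Rightarrow> (nat \<Rightarrow> nat \<Rightarrow> nat) \<Rightarrow> complex vec" where
  "final_state n M m U0 Us d =
     run_after (oracle_mat n M m d) Us (U0 *\<^sub>v unit_vec (qdim n M m) 0)"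

definition good_estimate :: "nat \<Rightarrow> real \<Rightarrow> (nat \<Rightarrow> nat \<Rightarrow> nat) \<Rightarrow> (nat \<Rightarrow> nat \<Rightarrow> real) \<Rightarrow> bool" where
  "good_estimate n \<alpha> d A \<longleftrightarrow>
     (\<forall>i<n. \<forall>j<n. real (d i j) \<le> A i j \<and> A i j \<le> \<alpha> * real (d i j))"

text \<open>Probability that measuring the final state in the computational basis and decoding
  the outcome k as out k yields a correct estimate.\<close>
definition success_prob ::
  "nat \<Rightarrow> nat \<Rightarrow> nat \<Rightarrow> real \<Rightarrow> complex mat \<Rightarrow> complex mat list \<Rightarrow>
   (nat \<Rightarrow> nat \<Rightarrow> nat \<Rightarrow> real) \<Rightarrow> (nat \<Rightarrow> nat \<Rightarrow> nat) \<Rightarrow> real" where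
  "success_prob n M m \<alpha> U0 Us out d =
     (let \<psi> = final_state n M m U0 Us d in
      \<Sum>k<qdim n M m. if good_estimate n \<alpha> d (out k) then (cmod (\<psi> $ k))\<^sup>2 else 0)"

definition solves_metric_estimation ::
  "nat \<Rightarrow> real \<Rightarrow> nat \<Rightarrow> nat \<Rightarrow> complex mat \<Rightarrow> complex mat list \<Rightarrow> (nat \<Rightarrow> nat \<Rightarrow> nat \<Rightarrow> real) \<Rightarrow> bool" where
  "solves_metric_estimation n \<alpha> M m U0 Us out \<longleftrightarrow>
     0 < m \<and> unitary_of_dim (qdim n M m) U0 \<and> (\<forall>U\<in>set Us. unitary_of_dim (qdim n M m) U) \<and>
     (\<forall>d. is_nat_metric n M d \<longrightarrow> success_prob n M m \<alpha> U0 Us out d \<ge> 2/3)"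

end

theory Submission
  imports Defs
begin

lemma lin_idx_lt: fixes x y p q :: nat
  assumes "x < p" "y < q" shows "x * q + y < p * q"
proof -
  have "x * q + y < x * q + q" using assms by simp
  also have "\<dots> = (x + 1) * q" by simp
  also have "\<dots> \<le> p * q" using assms by (intro mult_right_mono) auto
  finally show ?thesis .
qed

lemma lin_idx_inj: fixes x y x' y' q :: nat
  assumes "y < q" "y' < q" "x * q + y = x' * q + y'" shows "x = x' \<and> y = y'"
proof -
  from assms(3) have "(x*q+y) div q = (x'*q+y') div q" "(x*q+y) mod q = (x'*q+y') mod q" by simp_all
  moreover have "0 < q" using assms by simp
  ultimately show ?thesis using assms(1,2) by simp
qed

lemma lin_idx_decomp: fixes c p q :: nat
  assumes "c < p * q" shows "c div q < p \<and> c mod q < q \<and> c = (c div q) * q + c mod q"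
  using assms by (metis div_mult_mod_eq less_mult_imp_div_less mod_less_divisor mult_zero_right not_less_zero zero_less_iff_neq_zero)

lemma qidx_lt:
  assumes "i < n" "j < n" "a < M" "w < m"
  shows "qidx n M m i j a w < qdim n M m"
  unfolding qidx_def qdim_def using assms
  by (intro lin_idx_lt) auto

lemma qidx_inj:
  assumes "j < n" "a < M" "w < m" "j' < n" "a' < M" "w' < m"
    and "qidx n M m i j a w = qidx n M m i' j' a' w'"
  shows "i = i' \<and> j = j' \<and> a = a' \<and> w = w'"
  using assms unfolding qidx_def
  by (metis lin_idx_inj)

lemma qidx_decomp:
  assumes "c < qdim n M m"
  shows "\<exists>i j a w. i < n \<and> j < n \<and> a < M \<and> w < m \<and> c = qidx n M m i j a w"
proof -
  from assms have c: "c < (n * n * M) * m" unfolding qdim_def by simp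
  note d1 = lin_idx_decomp[OF c]
  define c1 where "c1 = c div m"
  have c1: "c1 < (n * n) * M" using d1 c1_def by simp
  note d2 = lin_idx_decomp[OF c1]
  define c2 where "c2 = c1 div M"
  have c2: "c2 < n * n" using d2 c2_def by simp
  note d3 = lin_idx_decomp[OF c2]
  show ?thesis unfolding qidx_def
    apply (rule exI[of _ "c2 div n"], rule exI[of _ "c2 mod n"], rule exI[of _ "c1 mod M"], rule exI[of _ "c mod m"])
    using d1 d2 d3 c1_def c2_def by metis
qed

lemma oracle_entry:
  assumes "i < n" "j < n" "a < M" "w < m" "r < qdim n M m"
  shows "oracle_mat n M m d $$ (r, qidx n M m i j a w) =
           (if r = qidx n M m i j ((a + d i j) mod M) w then 1 else 0)"
proof -
  have c: "qidx n M m i j a w < qdim n M m" using assms qidx_lt by auto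
  have "(\<exists>i' j' a' w'. i' < n \<and> j' < n \<and> a' < M \<and> w' < m \<and>
                   qidx n M m i j a w = qidx n M m i' j' a' w' \<and> r = qidx n M m i' j' ((a' + d i' j') mod M) w')
        \<longleftrightarrow> r = qidx n M m i j ((a + d i j) mod M) w"
    using assms qidx_inj[of j n a M w m] by blast
  then show ?thesis unfolding oracle_mat_def using c assms(5) by simp
qed

definition act :: "nat \<Rightarrow> complex mat \<Rightarrow> (nat \<Rightarrow> complex) \<Rightarrow> nat \<Rightarrow> complex" where
  "act K A \<phi> = (\<lambda>r. if r < K then \<Sum>c<K. A $$ (r,c) * \<phi> c else 0)"

definition nrm :: "nat \<Rightarrow> (nat \<Rightarrow> complex) \<Rightarrow> real" where
  "nrm K \<phi> = (\<Sum>k<K. (cmod (\<phi> k))\<^sup>2)"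

lemma nrm_complex: "complex_of_real (nrm K \<phi>) = (\<Sum>k<K. cnj (\<phi> k) * \<phi> k)"
proof -
  have "\<And>z. complex_of_real ((cmod z)\<^sup>2) = cnj z * z" by (metis complex_norm_square mult.commute)
  then show ?thesis unfolding nrm_def of_real_sum by simp
qed

lemma act_norm:
  assumes "\<And>c c'. c < K \<Longrightarrow> c' < K \<Longrightarrow> (\<Sum>r<K. cnj (A $$ (r,c)) * A $$ (r,c')) = (if c = c' then 1 else 0)"
  shows "nrm K (act K A \<phi>) = nrm K \<phi>"
proof -
  have "complex_of_real (nrm K (act K A \<phi>)) =
        (\<Sum>r<K. cnj (\<Sum>c<K. A $$ (r,c) * \<phi> c) * (\<Sum>c'<K. A $$ (r,c') * \<phi> c'))"
    unfolding nrm_complex act_def by (intro sum.cong) auto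
  also have "\<dots> = (\<Sum>r<K. \<Sum>c'<K. \<Sum>c<K. cnj (\<phi> c) * \<phi> c' * (cnj (A $$ (r,c)) * A $$ (r,c')))"
    by (simp add: sum_product algebra_simps)
  also have "\<dots> = (\<Sum>c'<K. \<Sum>r<K. \<Sum>c<K. cnj (\<phi> c) * \<phi> c' * (cnj (A $$ (r,c)) * A $$ (r,c')))"
    by (rule sum.swap)
  also have "\<dots> = (\<Sum>c'<K. \<Sum>c<K. \<Sum>r<K. cnj (\<phi> c) * \<phi> c' * (cnj (A $$ (r,c)) * A $$ (r,c')))"
    by (rule sum.cong[OF refl], rule sum.swap)
  also have "\<dots> = (\<Sum>c'<K. \<Sum>c<K. cnj (\<phi> c) * \<phi> c' * (if c = c' then 1 else 0))"
    by (simp add: assms flip: sum_distrib_left)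
  also have "\<dots> = (\<Sum>c<K. cnj (\<phi> c) * \<phi> c)"
    by (simp add: if_distrib eq_commute cong: if_cong)
  also have "\<dots> = complex_of_real (nrm K \<phi>)" by (simp add: nrm_complex)
  finally show ?thesis using of_real_eq_iff by blast
qed

lemma unitary_entries:
  assumes "unitary_of_dim K U" "c < K" "c' < K"
  shows "(\<Sum>r<K. cnj (U $$ (r,c)) * U $$ (r,c')) = (if c = c' then 1 else 0)"
proof -
  have U: "U \<in> carrier_mat K K" and e: "adjoint_mat U * U = 1\<^sub>m K" using assms unfolding unitary_of_dim_def by auto
  have "(adjoint_mat U * U) $$ (c,c') = (\<Sum>r<K. cnj (U $$ (r,c)) * U $$ (r,c'))"
    using U assms(2,3) unfolding adjoint_mat_def
    by (simp add: scalar_prod_def atLeast0LessThan)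
  then show ?thesis using e assms(2,3) by simp
qed

lemma mod_cancel_aux: fixes a a' t M :: nat
  assumes "(a + t) mod M = (a' + t) mod M" "a < M" "a' < M" "a \<le> a'" shows "a = a'"
proof -
  have "M dvd (a' + t) - (a + t)" using assms(1,4) mod_eq_dvd_iff_nat[of "a + t" "a' + t" M] by simp
  then have "M dvd a' - a" by simp
  moreover have "a' - a < M" using assms by simp
  ultimately show ?thesis using assms(4) by (metis diff_is_0_eq' dvd_imp_le le_antisym not_less zero_less_diff)
qed
lemma mod_cancel: fixes a a' t M :: nat
  assumes "(a + t) mod M = (a' + t) mod M" "a < M" "a' < M" shows "a = a'"
  using mod_cancel_aux[of a t M a'] mod_cancel_aux[of a' t M a] assms by (cases "a \<le> a'") auto

lemma oracle_entries:
  assumes "c < qdim n M m" "c' < qdim n M m"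
  shows "(\<Sum>r<qdim n M m. cnj (oracle_mat n M m d $$ (r,c)) * oracle_mat n M m d $$ (r,c')) = (if c = c' then 1 else 0)"
proof -
  obtain i j a w where c: "i < n" "j < n" "a < M" "w < m" "c = qidx n M m i j a w" using qidx_decomp[OF assms(1)] by blast
  obtain i' j' a' w' where c': "i' < n" "j' < n" "a' < M" "w' < m" "c' = qidx n M m i' j' a' w'" using qidx_decomp[OF assms(2)] by blast
  define p where "p = qidx n M m i j ((a + d i j) mod M) w"
  define p' where "p' = qidx n M m i' j' ((a' + d i' j') mod M) w'"
  have M: "0 < M" using c by simp
  have pK: "p < qdim n M m" unfolding p_def using c M by (intro qidx_lt) auto
  have "(\<Sum>r<qdim n M m. cnj (oracle_mat n M m d $$ (r,c)) * oracle_mat n M m d $$ (r,c')) =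
        (\<Sum>r<qdim n M m. (if r = p then 1 else 0) * (if r = p' then 1 else 0))"
    by (rule sum.cong[OF refl]) (simp add: c c' oracle_entry p_def p'_def)
  also have "\<dots> = (\<Sum>r<qdim n M m. if r = p then (if p = p' then 1 else 0) else 0)"
    by (rule sum.cong[OF refl]) auto
  also have "\<dots> = (if p = p' then 1 else 0)" using pK by (simp only: sum.delta finite_lessThan) simp
  also have "(p = p') = (c = c')"
  proof
    assume "p = p'"
    then have e: "i = i' \<and> j = j' \<and> (a + d i j) mod M = (a' + d i' j') mod M \<and> w = w'"
      unfolding p_def p'_def using c c' M by (intro qidx_inj) auto
    then have "a = a'" using mod_cancel[of a "d i j" M a'] c c' by metis
    then show "c = c'" using e c c' by simp
  next
    assume "c = c'"
    then have "i = i' \<and> j = j' \<and> a = a' \<and> w = w'" using c c' by (intro qidx_inj) auto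
    then show "p = p'" unfolding p_def p'_def by simp
  qed
  finally show ?thesis .
qed

fun runF :: "nat \<Rightarrow> complex mat \<Rightarrow> complex mat list \<Rightarrow> (nat \<Rightarrow> complex) \<Rightarrow> nat \<Rightarrow> complex" where
  "runF K Q [] \<phi> = \<phi>"
| "runF K Q (U # Us) \<phi> = runF K Q Us (act K U (act K Q \<phi>))"

lemma runF_cong: "(\<And>k. k < K \<Longrightarrow> \<phi> k = \<phi>' k) \<Longrightarrow> k < K \<Longrightarrow> runF K Q Us \<phi> k = runF K Q Us \<phi>' k"
proof (cases Us)
  case Nil
  then show "(\<And>k. k < K \<Longrightarrow> \<phi> k = \<phi>' k) \<Longrightarrow> k < K \<Longrightarrow> runF K Q Us \<phi> k = runF K Q Us \<phi>' k" by simp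
next
  case (Cons U Us')
  assume h: "\<And>k. k < K \<Longrightarrow> \<phi> k = \<phi>' k"
  have "act K Q \<phi> = act K Q \<phi>'" unfolding act_def using h by (intro ext) (auto intro!: sum.cong)
  then show ?thesis using Cons by simp
qed

lemma mult_mat_vec_act:
  assumes "A \<in> carrier_mat K K" "v \<in> carrier_vec K" "k < K"
  shows "(A *\<^sub>v v) $ k = act K A (\<lambda>i. v $ i) k"
  using assms unfolding act_def by (simp add: scalar_prod_def atLeast0LessThan)

lemma run_after_runF:
  assumes "Q \<in> carrier_mat K K" "\<forall>U\<in>set Us. U \<in> carrier_mat K K" "v \<in> carrier_vec K"
  shows "run_after Q Us v \<in> carrier_vec K \<and> (\<forall>k<K. run_after Q Us v $ k = runF K Q Us (\<lambda>i. v $ i) k)"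
  using assms(2,3)
proof (induction Us arbitrary: v)
  case Nil
  then show ?case by simp
next
  case (Cons U Us)
  define v' where "v' = U *\<^sub>v (Q *\<^sub>v v)"
  have U: "U \<in> carrier_mat K K" using Cons by simp
  have v': "v' \<in> carrier_vec K" unfolding v'_def using U assms(1) Cons.prems by (meson mult_mat_vec_carrier)
  have IH: "run_after Q Us v' \<in> carrier_vec K \<and> (\<forall>k<K. run_after Q Us v' $ k = runF K Q Us (\<lambda>i. v' $ i) k)"
    using Cons v' by simp
  have agree: "\<And>k. k < K \<Longrightarrow> v' $ k = act K U (act K Q (\<lambda>i. v $ i)) k"
  proof -
    fix k assume k: "k < K"
    have "v' $ k = act K U (\<lambda>i. (Q *\<^sub>v v) $ i) k" unfolding v'_def
      using U assms(1) Cons.prems k by (intro mult_mat_vec_act) auto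
    also have "(\<lambda>i. (Q *\<^sub>v v) $ i) = (\<lambda>i. if i < K then act K Q (\<lambda>i. v $ i) i else (Q *\<^sub>v v) $ i)"
      using mult_mat_vec_act[OF assms(1) Cons.prems(2)] by auto
    also have "act K U \<dots> = act K U (act K Q (\<lambda>i. v $ i))" unfolding act_def by (intro ext) (auto intro!: sum.cong)
    finally show "v' $ k = act K U (act K Q (\<lambda>i. v $ i)) k" .
  qed
  show ?case using IH runF_cong[OF agree] by (simp add: v'_def)
qed

lemma runF_nrm:
  assumes "\<And>c c'. c < K \<Longrightarrow> c' < K \<Longrightarrow> (\<Sum>r<K. cnj (Q $$ (r,c)) * Q $$ (r,c')) = (if c = c' then 1 else 0)"
    and "\<forall>U\<in>set Us. unitary_of_dim K U"
  shows "nrm K (runF K Q Us \<phi>) = nrm K \<phi>"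
  using assms(2)
proof (induction Us arbitrary: \<phi>)
  case Nil then show ?case by simp
next
  case (Cons U Us)
  then have "nrm K (runF K Q (U # Us) \<phi>) = nrm K (act K U (act K Q \<phi>))" by simp
  also have "\<dots> = nrm K (act K Q \<phi>)" using Cons.prems unitary_entries by (intro act_norm) auto
  also have "\<dots> = nrm K \<phi>" using assms(1) by (intro act_norm) auto
  finally show ?case .
qed


definition Eset :: "nat \<Rightarrow> (nat \<times> nat) set" where
  "Eset n = {..<n div 2} \<times> {n div 2..<n}"

definition dY :: "nat \<Rightarrow> (nat \<times> nat) set \<Rightarrow> nat \<Rightarrow> nat \<Rightarrow> nat" where
  "dY n Y i j = (if i = j then 0 else if (i < n div 2) = (j < n div 2) then 2
                 else if (min i j, max i j) \<in> Y then 3 else 1)"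

lemma dY_metric: assumes "3 < M" shows "is_nat_metric n M (dY n Y)"
  unfolding is_nat_metric_def dY_def using assms by auto

lemma dY_decode:
  assumes "Y \<subseteq> Eset n" "Y' \<subseteq> Eset n" "\<alpha> < 3"
    and "good_estimate n \<alpha> (dY n Y) A" "good_estimate n \<alpha> (dY n Y') A"
  shows "Y = Y'"
proof -
  have key: "e \<in> Y'" if "e \<in> Y" "Y \<subseteq> Eset n" "Y' \<subseteq> Eset n"
     "good_estimate n \<alpha> (dY n Y) A" "good_estimate n \<alpha> (dY n Y') A" for Y Y' e
  proof (rule ccontr)
    assume nY': "e \<notin> Y'"
    obtain l r where e: "e = (l, r)" by force
    have lr: "l < n div 2" "n div 2 \<le> r" "r < n" using that e unfolding Eset_def by auto
    then have ln: "l < n" by simp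
    have d1: "dY n Y l r = 3" using lr that(1) e unfolding dY_def by auto
    have d2: "dY n Y' l r = 1" using lr nY' e unfolding dY_def by auto
    have "real (dY n Y l r) \<le> A l r" using that(4) ln lr(3) unfolding good_estimate_def by blast
    then have "3 \<le> A l r" using d1 by simp
    moreover have "A l r \<le> \<alpha> * real (dY n Y' l r)" using that(5) ln lr(3) unfolding good_estimate_def by blast
    then have "A l r \<le> \<alpha>" using d2 by simp
    ultimately show False using assms(3) by simp
  qed
  show ?thesis using key[of _ Y Y'] key[of _ Y' Y] assms by blast
qed

lemma oracle_entry_fun:
  assumes "c < qdim n M m" "r < qdim n M m"
  shows "\<exists>i j g. i < n \<and> j < n \<and> (\<forall>d. oracle_mat n M m d $$ (r, c) = g (d i j))"
proof -
  obtain i j a w where c: "i < n" "j < n" "a < M" "w < m" "c = qidx n M m i j a w"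
    using qidx_decomp[OF assms(1)] by blast
  show ?thesis
    apply (rule exI[of _ i], rule exI[of _ j],
           rule exI[of _ "\<lambda>t. if r = qidx n M m i j ((a + t) mod M) w then 1 else 0"])
    using c assms(2) oracle_entry by simp
qed

lemma oracle_decomp_entry:
  assumes "c < qdim n M m" "r < qdim n M m"
  shows "oracle_mat n M m (dY n Y) $$ (r, c) = oracle_mat n M m (dY n {}) $$ (r, c) +
     (\<Sum>e\<in>Eset n. if e \<in> Y then oracle_mat n M m (dY n {e}) $$ (r, c) - oracle_mat n M m (dY n {}) $$ (r, c) else 0)"
proof -
  obtain i j g where ij: "i < n" "j < n" and g: "\<And>d. oracle_mat n M m d $$ (r, c) = g (d i j)"
    using oracle_entry_fun[OF assms] by blast
  show ?thesis
  proof (cases "i \<noteq> j \<and> (i < n div 2) \<noteq> (j < n div 2)")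
    case True
    define p where "p = (min i j, max i j)"
    have pE: "p \<in> Eset n" unfolding p_def Eset_def using True ij by (auto simp: min_def max_def)
    have dZ: "\<And>Z. dY n Z i j = (if p \<in> Z then 3 else 1)" unfolding dY_def p_def using True by auto
    have "(\<Sum>e\<in>Eset n. if e \<in> Y then g (dY n {e} i j) - g (dY n {} i j) else 0) =
          (\<Sum>e\<in>Eset n. if e = p then (if p \<in> Y then g 3 - g 1 else 0) else 0)"
      by (rule sum.cong[OF refl]) (auto simp: dZ)
    also have "\<dots> = (if p \<in> Y then g 3 - g 1 else 0)" using pE by (simp add: Eset_def)
    finally show ?thesis unfolding g dZ by simp
  next
    case False
    then have dZ: "\<And>Z. dY n Z i j = dY n {} i j" unfolding dY_def by auto
    have "(\<Sum>e\<in>Eset n. if e \<in> Y then g (dY n {e} i j) - g (dY n {} i j) else 0) = 0"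
      by (rule sum.neutral) (metis dZ diff_self)
    then show ?thesis unfolding g using dZ[of Y] by simp
  qed
qed

lemma oracle_decomp_act:
  "act (qdim n M m) (oracle_mat n M m (dY n Y)) \<phi> r = act (qdim n M m) (oracle_mat n M m (dY n {})) \<phi> r +
     (\<Sum>e\<in>Eset n. if e \<in> Y then act (qdim n M m) (oracle_mat n M m (dY n {e})) \<phi> r
                                  - act (qdim n M m) (oracle_mat n M m (dY n {})) \<phi> r else 0)"
proof (cases "r < qdim n M m")
  case True
  let ?K = "qdim n M m"
  let ?O = "\<lambda>Z. oracle_mat n M m (dY n Z)"
  have "act ?K (?O Y) \<phi> r = (\<Sum>c<?K. ?O Y $$ (r,c) * \<phi> c)" unfolding act_def using True by simp
  also have "\<dots> = (\<Sum>c<?K. (?O {} $$ (r, c) +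
     (\<Sum>e\<in>Eset n. if e \<in> Y then ?O {e} $$ (r, c) - ?O {} $$ (r, c) else 0)) * \<phi> c)"
    by (rule sum.cong[OF refl]) (rule arg_cong[where f="\<lambda>x. x * \<phi> _"], rule oracle_decomp_entry[OF _ True], simp)
  also have "\<dots> = (\<Sum>c<?K. ?O {} $$ (r, c) * \<phi> c) +
     (\<Sum>c<?K. \<Sum>e\<in>Eset n. (if e \<in> Y then ?O {e} $$ (r, c) - ?O {} $$ (r, c) else 0) * \<phi> c)"
    by (simp add: distrib_right sum.distrib sum_distrib_right)
  also have "(\<Sum>c<?K. \<Sum>e\<in>Eset n. (if e \<in> Y then ?O {e} $$ (r, c) - ?O {} $$ (r, c) else 0) * \<phi> c)
     = (\<Sum>c<?K. \<Sum>e\<in>Eset n. if e \<in> Y then ?O {e} $$ (r, c) * \<phi> c - ?O {} $$ (r, c) * \<phi> c else 0)"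
    by (intro sum.cong refl) (simp add: left_diff_distrib)
  also have "(\<Sum>c<?K. \<Sum>e\<in>Eset n. if e \<in> Y then ?O {e} $$ (r, c) * \<phi> c - ?O {} $$ (r, c) * \<phi> c else 0)
     = (\<Sum>e\<in>Eset n. \<Sum>c<?K. if e \<in> Y then ?O {e} $$ (r, c) * \<phi> c - ?O {} $$ (r, c) * \<phi> c else 0)"
    by (rule sum.swap)
  also have "\<dots> = (\<Sum>e\<in>Eset n. if e \<in> Y then act ?K (?O {e}) \<phi> r - act ?K (?O {}) \<phi> r else 0)"
    unfolding act_def using True by (intro sum.cong refl) (simp add: sum_subtractf)
  finally show ?thesis unfolding act_def using True by simp
next
  case False
  have z: "\<And>A. act (qdim n M m) A \<phi> r = 0" unfolding act_def using False by simp
  show ?thesis by (simp add: z cong: if_cong)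
qed

inductive polyd :: "(nat \<times> nat) set set \<Rightarrow> ((nat \<times> nat) set \<Rightarrow> nat \<Rightarrow> complex) \<Rightarrow> bool" for SS where
  pzero: "polyd SS (\<lambda>Y k. 0)"
| pterm: "S \<in> SS \<Longrightarrow> polyd SS (\<lambda>Y k. if S \<subseteq> Y then w k else 0)"
| padd: "polyd SS f \<Longrightarrow> polyd SS g \<Longrightarrow> polyd SS (\<lambda>Y k. f Y k + g Y k)"

lemma psum: assumes "finite F" "\<forall>e\<in>F. polyd SS (f e)" shows "polyd SS (\<lambda>Y k. \<Sum>e\<in>F. f e Y k)"
  using assms
proof (induction F rule: finite_induct)
  case empty then show ?case by (simp add: pzero)
next
  case (insert x F)
  then show ?case using padd[of SS "f x" "\<lambda>Y k. \<Sum>e\<in>F. f e Y k"] by simp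
qed

lemma pact: assumes "polyd SS f" shows "polyd SS (\<lambda>Y. act K U (f Y))"
  using assms
proof (induction rule: polyd.induct)
  case pzero
  have eq: "(\<lambda>Y. act K U (\<lambda>k. 0)) = (\<lambda>Y k. 0)" by (intro ext) (simp add: act_def)
  show ?case by (rule ssubst[of _ _ "polyd SS", OF eq]) (rule polyd.pzero)
next
  case (pterm S w)
  have eq: "(\<lambda>Y. act K U (\<lambda>k. if S \<subseteq> Y then w k else 0)) = (\<lambda>Y k. if S \<subseteq> Y then act K U w k else 0)"
    unfolding act_def by (intro ext) auto
  show ?case by (rule ssubst[of _ _ "polyd SS", OF eq]) (rule polyd.pterm[OF pterm])
next
  case (padd f g)
  have eq: "(\<lambda>Y. act K U (\<lambda>k. f Y k + g Y k)) = (\<lambda>Y k. act K U (f Y) k + act K U (g Y) k)"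
    unfolding act_def by (intro ext) (auto simp: distrib_left sum.distrib)
  show ?case by (rule ssubst[of _ _ "polyd SS", OF eq]) (rule polyd.padd[OF padd.IH])
qed

definition SSt :: "(nat \<times> nat) set \<Rightarrow> nat \<Rightarrow> (nat \<times> nat) set set" where
  "SSt E t = {S. S \<subseteq> E \<and> card S \<le> t}"

lemma porc: assumes "polyd (SSt (Eset n) t) f"
  shows "polyd (SSt (Eset n) (t+1)) (\<lambda>Y. act (qdim n M m) (oracle_mat n M m (dY n Y)) (f Y))"
  using assms
proof (induction rule: polyd.induct)
  case pzero
  have eq: "(\<lambda>Y. act (qdim n M m) (oracle_mat n M m (dY n Y)) (\<lambda>k. 0)) = (\<lambda>Y k. 0)" by (intro ext) (simp add: act_def)
  show ?case by (rule ssubst[of _ _ "polyd (SSt (Eset n) (t+1))", OF eq]) (rule polyd.pzero)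
next
  case (pterm S w)
  let ?K = "qdim n M m"
  let ?O = "\<lambda>Z. oracle_mat n M m (dY n Z)"
  have finE: "finite (Eset n)" unfolding Eset_def by simp
  have S: "S \<subseteq> Eset n" "card S \<le> t" using pterm unfolding SSt_def by auto
  have finS: "finite S" using S finE finite_subset by blast
  have "(\<lambda>Y. act ?K (?O Y) (\<lambda>k. if S \<subseteq> Y then w k else 0)) =
        (\<lambda>Y k. (if S \<subseteq> Y then act ?K (?O {}) w k else 0) +
           (\<Sum>e\<in>Eset n. if insert e S \<subseteq> Y then act ?K (?O {e}) w k - act ?K (?O {}) w k else 0))"
  proof (intro ext)
    fix Y k
    show "act ?K (?O Y) (\<lambda>k. if S \<subseteq> Y then w k else 0) k =
        (if S \<subseteq> Y then act ?K (?O {}) w k else 0) +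
           (\<Sum>e\<in>Eset n. if insert e S \<subseteq> Y then act ?K (?O {e}) w k - act ?K (?O {}) w k else 0)"
    proof (cases "S \<subseteq> Y")
      case True
      then show ?thesis using oracle_decomp_act[of n M m Y w k] by simp
    next
      case False
      then show ?thesis unfolding act_def by auto
    qed
  qed
  moreover have "polyd (SSt (Eset n) (t+1)) (\<lambda>Y k. (if S \<subseteq> Y then act ?K (?O {}) w k else 0) +
           (\<Sum>e\<in>Eset n. if insert e S \<subseteq> Y then act ?K (?O {e}) w k - act ?K (?O {}) w k else 0))"
  proof (rule polyd.padd)
    show "polyd (SSt (Eset n) (t+1)) (\<lambda>Y k. if S \<subseteq> Y then act ?K (?O {}) w k else 0)"
      using S by (intro polyd.pterm) (auto simp: SSt_def)
    show "polyd (SSt (Eset n) (t+1)) (\<lambda>Y k. \<Sum>e\<in>Eset n. if insert e S \<subseteq> Y then act ?K (?O {e}) w k - act ?K (?O {}) w k else 0)"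
    proof (rule psum[OF finE], intro ballI)
      fix e assume e: "e \<in> Eset n"
      have "card (insert e S) \<le> t + 1" using S finS by (simp add: card_insert_if)
      then have "insert e S \<in> SSt (Eset n) (t+1)" using S e unfolding SSt_def by auto
      then show "polyd (SSt (Eset n) (t+1)) (\<lambda>Y k. if insert e S \<subseteq> Y then act ?K (?O {e}) w k - act ?K (?O {}) w k else 0)"
        by (rule polyd.pterm)
    qed
  qed
  ultimately show ?case by simp
next
  case (padd f g)
  have eq: "(\<lambda>Y. act (qdim n M m) (oracle_mat n M m (dY n Y)) (\<lambda>k. f Y k + g Y k)) =
        (\<lambda>Y k. act (qdim n M m) (oracle_mat n M m (dY n Y)) (f Y) k + act (qdim n M m) (oracle_mat n M m (dY n Y)) (g Y) k)"
    unfolding act_def by (intro ext) (auto simp: distrib_left sum.distrib)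
  show ?case by (rule ssubst[of _ _ "polyd (SSt (Eset n) (t+1))", OF eq]) (rule polyd.padd[OF padd.IH])
qed

lemma prun: assumes "polyd (SSt (Eset n) t) f"
  shows "polyd (SSt (Eset n) (t + length Us)) (\<lambda>Y. runF (qdim n M m) (oracle_mat n M m (dY n Y)) Us (f Y))"
  using assms
proof (induction Us arbitrary: t f)
  case Nil then show ?case by simp
next
  case (Cons U Us)
  have "polyd (SSt (Eset n) (t+1)) (\<lambda>Y. act (qdim n M m) U (act (qdim n M m) (oracle_mat n M m (dY n Y)) (f Y)))"
    by (rule pact, rule porc, rule Cons.prems)
  from Cons.IH[OF this] show ?case by simp
qed

lemma pexplicit: assumes "polyd SS f" "finite SS"
  shows "\<exists>v. \<forall>Y k. f Y k = (\<Sum>S\<in>SS. if S \<subseteq> Y then v S k else 0)"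
  using assms
proof (induction rule: polyd.induct)
  case pzero
  show ?case by (rule exI[of _ "\<lambda>S k. 0"]) simp
next
  case (pterm S w)
  show ?case
  proof (rule exI[of _ "\<lambda>S' k. if S' = S then w k else 0"], intro allI)
    fix Y k
    have "(\<Sum>S'\<in>SS. if S' \<subseteq> Y then (if S' = S then w k else 0) else 0) =
          (\<Sum>S'\<in>SS. if S' = S then (if S \<subseteq> Y then w k else 0) else 0)"
      by (rule sum.cong) auto
    also have "\<dots> = (if S \<subseteq> Y then w k else 0)" using pterm by simp
    finally show "(if S \<subseteq> Y then w k else 0) = (\<Sum>S'\<in>SS. if S' \<subseteq> Y then (if S' = S then w k else 0) else 0)" by simp
  qed
next
  case (padd f g)
  then obtain v1 v2 where v1: "\<forall>Y k. f Y k = (\<Sum>S\<in>SS. if S \<subseteq> Y then v1 S k else 0)"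
    and v2: "\<forall>Y k. g Y k = (\<Sum>S\<in>SS. if S \<subseteq> Y then v2 S k else 0)" by blast
  show ?case
    by (rule exI[of _ "\<lambda>S k. v1 S k + v2 S k"]) (simp add: v1 v2 sum.distrib[symmetric] if_distrib cong: if_cong)
qed


definition ip :: "nat \<Rightarrow> (nat \<Rightarrow> complex) \<Rightarrow> (nat \<Rightarrow> complex) \<Rightarrow> complex" where
  "ip K u v = (\<Sum>k<K. cnj (u k) * v k)"

lemma ip_self: "ip K u u = complex_of_real (nrm K u)"
  unfolding ip_def nrm_complex ..

lemma ip_cnj: "ip K v u = cnj (ip K u v)"
  unfolding ip_def by (simp add: mult.commute)

lemma nrm_nonneg: "0 \<le> nrm K u" unfolding nrm_def by (simp add: sum_nonneg)

lemma nrm_zero: assumes "nrm K u = 0" "k < K" shows "u k = 0"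
proof -
  have "\<forall>k\<in>{..<K}. (cmod (u k))\<^sup>2 = 0"
    using assms(1) unfolding nrm_def by (subst sum_nonneg_eq_0_iff[symmetric]) auto
  then show ?thesis using assms(2) by simp
qed

definition orth :: "nat \<Rightarrow> (nat \<Rightarrow> complex) list \<Rightarrow> bool" where
  "orth K C \<longleftrightarrow> (\<forall>i<length C. \<forall>j<length C. i \<noteq> j \<longrightarrow> ip K (C!i) (C!j) = 0) \<and> (\<forall>i<length C. nrm K (C!i) \<noteq> 0)"

lemma ip_lin: "ip K u (\<lambda>k. x k - (\<Sum>i<L. c i * v i k)) = ip K u x - (\<Sum>i<L. c i * ip K u (v i))"
  unfolding ip_def by (simp add: right_diff_distrib sum_subtractf sum_distrib_left sum.swap[of _ "{..<L}"] algebra_simps)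

lemma gram_schmidt_ex:
  "\<exists>C. length C \<le> length B \<and> orth K C \<and>
       (\<forall>b\<in>set B. \<exists>a. \<forall>k<K. b k = (\<Sum>i<length C. a i * (C!i) k))"
proof (induction B)
  case Nil
  show ?case by (rule exI[of _ "[]"]) (simp add: orth_def)
next
  case (Cons b B)
  then obtain C where C: "length C \<le> length B" "orth K C"
     "\<forall>b\<in>set B. \<exists>a. \<forall>k<K. b k = (\<Sum>i<length C. a i * (C!i) k)" by blast
  define L where "L = length C"
  define coef where "coef i = ip K (C!i) b / ip K (C!i) (C!i)" for i
  define b' where "b' k = b k - (\<Sum>i<L. coef i * (C!i) k)" for k
  have b'_def2: "b' = (\<lambda>k. b k - (\<Sum>i<L. coef i * (C!i) k))" unfolding b'_def by simp
  have orthb': "ip K (C!j) b' = 0" if j: "j < L" for j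
  proof -
    have "ip K (C!j) b' = ip K (C!j) b - (\<Sum>i<L. coef i * ip K (C!j) (C!i))"
      unfolding b'_def2 by (rule ip_lin)
    also have "(\<Sum>i<L. coef i * ip K (C!j) (C!i)) = (\<Sum>i<L. if i = j then coef j * ip K (C!j) (C!j) else 0)"
      using C(2) j unfolding orth_def L_def by (intro sum.cong refl) auto
    also have "\<dots> = coef j * ip K (C!j) (C!j)" using j by simp
    also have "\<dots> = ip K (C!j) b" unfolding coef_def using C(2) j unfolding orth_def L_def ip_self by simp
    finally show ?thesis by simp
  qed
  have brep: "b k = (\<Sum>i<L. coef i * (C!i) k) + b' k" for k unfolding b'_def by simp
  show ?case
  proof (cases "nrm K b' = 0")
    case True
    have "\<forall>k<K. b k = (\<Sum>i<length C. coef i * (C!i) k)"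
      using brep nrm_zero[OF True] unfolding L_def by simp
    then show ?thesis using C by (intro exI[of _ C]) auto
  next
    case False
    define C' where "C' = C @ [b']"
    have lenC': "length C' = Suc L" unfolding C'_def L_def by simp
    have C'i: "C'!i = (if i < L then C!i else b')" if "i < Suc L" for i
      unfolding C'_def using that L_def by (auto simp: nth_append less_Suc_eq)
    have "orth K C'"
      unfolding orth_def lenC'
    proof (intro conjI allI impI)
      fix i j assume ij: "i < Suc L" "j < Suc L" "i \<noteq> j"
      show "ip K (C'!i) (C'!j) = 0"
      proof (cases "i < L")
        case True
        show ?thesis
        proof (cases "j < L")
          case True
          then show ?thesis using `i < L` ij C(2) C'i unfolding orth_def L_def by auto
        next
          case False
          then show ?thesis using `i < L` ij C'i orthb' by auto
        qed
      next
        case False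
        then have "j < L" using ij by auto
        then show ?thesis using False ij C'i orthb'[of j] ip_cnj[of K b' "C!j"] by auto
      qed
    next
      fix i assume i: "i < Suc L"
      show "nrm K (C'!i) \<noteq> 0" using C(2) False C'i[OF i] i unfolding orth_def L_def by auto
    qed
    moreover have "\<forall>b\<in>set (b # B). \<exists>a. \<forall>k<K. b k = (\<Sum>i<length C'. a i * (C'!i) k)"
    proof
      fix x assume x: "x \<in> set (b # B)"
      show "\<exists>a. \<forall>k<K. x k = (\<Sum>i<length C'. a i * (C'!i) k)"
      proof (cases "x = b")
        case True
        show ?thesis
        proof (rule exI[of _ "\<lambda>i. if i < L then coef i else 1"], intro allI impI)
          fix k assume "k < K"
          have "(\<Sum>i<length C'. (if i < L then coef i else 1) * (C'!i) k) = (\<Sum>i<L. coef i * (C!i) k) + b' k"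
            unfolding lenC' using C'i by (simp add: lessThan_Suc_atMost[symmetric])
          then show "x k = (\<Sum>i<length C'. (if i < L then coef i else 1) * (C'!i) k)" using brep True by simp
        qed
      next
        case False
        then have "x \<in> set B" using x by simp
        then obtain a where a: "\<forall>k<K. x k = (\<Sum>i<L. a i * (C!i) k)" using C(3) unfolding L_def by blast
        show ?thesis
        proof (rule exI[of _ "\<lambda>i. if i < L then a i else 0"], intro allI impI)
          fix k assume k: "k < K"
          have "(\<Sum>i<length C'. (if i < L then a i else 0) * (C'!i) k) = (\<Sum>i<L. a i * (C!i) k)"
            unfolding lenC' using C'i by (simp add: lessThan_Suc_atMost[symmetric])
          then show "x k = (\<Sum>i<length C'. (if i < L then a i else 0) * (C'!i) k)" using a k by simp
        qed
      qed
    qed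
    moreover have "length C' \<le> length (b # B)" using lenC' C(1) L_def by simp
    ultimately show ?thesis by blast
  qed
qed


lemma CS_real: fixes x y :: "nat \<Rightarrow> real"
  shows "(\<Sum>i\<in>I. x i * y i)\<^sup>2 \<le> (\<Sum>i\<in>I. (x i)\<^sup>2) * (\<Sum>i\<in>I. (y i)\<^sup>2)"
proof (cases "(\<Sum>i\<in>I. (y i)\<^sup>2) = 0")
  case True
  show ?thesis
  proof (cases "finite I")
    case fin: True
    then have "\<forall>i\<in>I. (y i)\<^sup>2 = 0" using True by (subst sum_nonneg_eq_0_iff[symmetric]) auto
    then have "\<forall>i\<in>I. y i = 0" by simp
    then show ?thesis by simp
  next
    case False then show ?thesis by simp
  qed
next
  case False
  have pos: "(\<Sum>i\<in>I. (y i)\<^sup>2) > 0" using False by (simp add: order_le_neq_trans sum_nonneg)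
  define S where "S = (\<Sum>i\<in>I. (y i)\<^sup>2)"
  define P where "P = (\<Sum>i\<in>I. x i * y i)"
  define X where "X = (\<Sum>i\<in>I. (x i)\<^sup>2)"
  define t where "t = P / S"
  have "0 \<le> (\<Sum>i\<in>I. (x i - t * y i)\<^sup>2)" by (simp add: sum_nonneg)
  also have "\<dots> = X - 2 * t * P + t\<^sup>2 * S"
    unfolding X_def P_def S_def
    by (simp add: power2_eq_square algebra_simps sum_distrib_left sum.distrib sum_subtractf)
  also have "\<dots> = X - P\<^sup>2 / S" unfolding t_def using pos S_def by (simp add: power2_eq_square field_simps)
  finally have "P\<^sup>2 / S \<le> X" by simp
  then have "P\<^sup>2 \<le> X * S" using pos S_def by (simp add: divide_le_eq)
  then show ?thesis unfolding P_def X_def S_def .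
qed

lemma nrm_expand:
  assumes "orth K C" "\<forall>k<K. \<psi> k = (\<Sum>i<length C. a i * (C!i) k)"
  shows "nrm K \<psi> = (\<Sum>i<length C. (cmod (a i))\<^sup>2 * nrm K (C!i))"
proof -
  let ?L = "length C"
  have "complex_of_real (nrm K \<psi>) = (\<Sum>k<K. cnj (\<Sum>i<?L. a i * (C!i) k) * (\<Sum>j<?L. a j * (C!j) k))"
    unfolding nrm_complex using assms(2) by simp
  also have "\<dots> = (\<Sum>k<K. \<Sum>j<?L. \<Sum>i<?L. cnj (a i) * a j * (cnj ((C!i) k) * (C!j) k))"
    by (simp add: sum_product algebra_simps)
  also have "\<dots> = (\<Sum>j<?L. \<Sum>k<K. \<Sum>i<?L. cnj (a i) * a j * (cnj ((C!i) k) * (C!j) k))"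
    by (rule sum.swap)
  also have "\<dots> = (\<Sum>j<?L. \<Sum>i<?L. \<Sum>k<K. cnj (a i) * a j * (cnj ((C!i) k) * (C!j) k))"
    by (rule sum.cong[OF refl], rule sum.swap)
  also have "\<dots> = (\<Sum>j<?L. \<Sum>i<?L. cnj (a i) * a j * ip K (C!i) (C!j))"
    unfolding ip_def by (simp add: sum_distrib_left)
  also have "\<dots> = (\<Sum>j<?L. \<Sum>i<?L. if i = j then cnj (a j) * a j * ip K (C!j) (C!j) else 0)"
    using assms(1) unfolding orth_def by (intro sum.cong refl) auto
  also have "\<dots> = (\<Sum>i<?L. cnj (a i) * a i * ip K (C!i) (C!i))" by simp
  also have "\<dots> = complex_of_real (\<Sum>i<?L. (cmod (a i))\<^sup>2 * nrm K (C!i))"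
    unfolding of_real_sum ip_self
    by (intro sum.cong refl) (metis complex_norm_square mult.commute of_real_mult)
  finally show ?thesis using of_real_eq_iff by blast
qed

definition wt :: "nat \<Rightarrow> (nat \<Rightarrow> complex) list \<Rightarrow> nat \<Rightarrow> real" where
  "wt K C k = (\<Sum>i<length C. (cmod ((C!i) k))\<^sup>2 / nrm K (C!i))"

lemma wt_nonneg: "0 \<le> wt K C k" unfolding wt_def by (simp add: sum_nonneg nrm_nonneg)

lemma wt_sum: assumes "orth K C" shows "(\<Sum>k<K. wt K C k) = real (length C)"
proof -
  have "(\<Sum>k<K. wt K C k) = (\<Sum>i<length C. (\<Sum>k<K. (cmod ((C!i) k))\<^sup>2) / nrm K (C!i))"
    unfolding wt_def by (subst sum.swap) (simp add: sum_divide_distrib)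
  also have "\<dots> = (\<Sum>i<length C. 1)"
    using assms unfolding orth_def nrm_def[symmetric] by (intro sum.cong refl) (simp add: nrm_def)
  finally show ?thesis by simp
qed

lemma pt_bound:
  assumes "orth K C" "\<forall>k<K. \<psi> k = (\<Sum>i<length C. a i * (C!i) k)" "k < K"
  shows "(cmod (\<psi> k))\<^sup>2 \<le> nrm K \<psi> * wt K C k"
proof -
  let ?L = "length C"
  have np: "\<And>i. i < ?L \<Longrightarrow> nrm K (C!i) > 0" using assms(1) nrm_nonneg unfolding orth_def
    by (metis order_le_neq_trans)
  have "cmod (\<psi> k) \<le> (\<Sum>i<?L. cmod (a i) * cmod ((C!i) k))"
    using assms(2,3) by (metis (no_types, lifting) norm_mult norm_sum sum.cong)
  also have "\<dots> = (\<Sum>i<?L. (cmod (a i) * sqrt (nrm K (C!i))) * (cmod ((C!i) k) / sqrt (nrm K (C!i))))"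
  proof (intro sum.cong refl)
    fix i assume "i \<in> {..<?L}"
    then have "sqrt (nrm K (C!i)) \<noteq> 0" using np[of i] by simp
    then show "cmod (a i) * cmod ((C!i) k) = (cmod (a i) * sqrt (nrm K (C!i))) * (cmod ((C!i) k) / sqrt (nrm K (C!i)))"
      by (simp add: field_simps)
  qed
  finally have h: "cmod (\<psi> k) \<le> \<dots>" .
  have "(cmod (\<psi> k))\<^sup>2 \<le> (\<Sum>i<?L. (cmod (a i) * sqrt (nrm K (C!i))) * (cmod ((C!i) k) / sqrt (nrm K (C!i))))\<^sup>2"
    using h by (intro power_mono) auto
  also have "\<dots> \<le> (\<Sum>i<?L. (cmod (a i) * sqrt (nrm K (C!i)))\<^sup>2) * (\<Sum>i<?L. (cmod ((C!i) k) / sqrt (nrm K (C!i)))\<^sup>2)"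
    by (rule CS_real)
  also have "(\<Sum>i<?L. (cmod (a i) * sqrt (nrm K (C!i)))\<^sup>2) = nrm K \<psi>"
    unfolding nrm_expand[OF assms(1,2)] using np by (intro sum.cong refl) (simp add: power_mult_distrib nrm_nonneg)
  also have "(\<Sum>i<?L. (cmod ((C!i) k) / sqrt (nrm K (C!i)))\<^sup>2) = wt K C k"
    unfolding wt_def using np by (intro sum.cong refl) (simp add: power_divide nrm_nonneg)
  finally show ?thesis .
qed


lemma finite_SSt: "finite E \<Longrightarrow> finite (SSt E t)"
  unfolding SSt_def by simp

lemma card_SSt: assumes "finite E" shows "card (SSt E T) * 4 ^ card E \<le> 4 ^ T * 5 ^ card E"
  using assms
proof (induction E arbitrary: T rule: finite_induct)
  case empty
  have "SSt {} T = {{}}" unfolding SSt_def by auto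
  then show ?case by simp
next
  case (insert x E)
  let ?N = "card E"
  have cI: "card (insert x E) = Suc ?N" using insert by simp
  show ?case
  proof (cases T)
    case 0
    have fin: "finite (insert x E)" using insert(1) by simp
    have "SSt (insert x E) T = {{}}"
    proof
      show "SSt (insert x E) T \<subseteq> {{}}"
      proof
        fix S assume "S \<in> SSt (insert x E) T"
        then have S: "S \<subseteq> insert x E" "card S = 0" unfolding SSt_def 0 by auto
        then have "finite S" using fin finite_subset by blast
        then have "S = {}" using S(2) by simp
        then show "S \<in> {{}}" by simp
      qed
      show "{{}} \<subseteq> SSt (insert x E) T" unfolding SSt_def by simp
    qed
    then have "card (SSt (insert x E) T) = 1" by simp
    moreover have "(4::nat) ^ Suc ?N \<le> 5 ^ Suc ?N" by (rule power_mono) auto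
    ultimately show ?thesis using 0 cI by simp
  next
    case (Suc T')
    have sub: "SSt (insert x E) T \<subseteq> SSt E T \<union> insert x ` SSt E T'"
    proof
      fix S assume S: "S \<in> SSt (insert x E) T"
      then have S1: "S \<subseteq> insert x E" "card S \<le> T" unfolding SSt_def by auto
      have finS: "finite S" using S1(1) insert(1) finite_subset by blast
      show "S \<in> SSt E T \<union> insert x ` SSt E T'"
      proof (cases "x \<in> S")
        case True
        have "S - {x} \<subseteq> E" using S1 by auto
        moreover have "card (S - {x}) \<le> T'" using S1(2) True finS Suc by (simp add: card_Diff_singleton)
        ultimately have "S - {x} \<in> SSt E T'" unfolding SSt_def by simp
        moreover have "S = insert x (S - {x})" using True by auto
        ultimately show ?thesis by blast
      next
        case False
        then have "S \<subseteq> E" using S1 by auto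
        then show ?thesis using S1 unfolding SSt_def by simp
      qed
    qed
    have fin: "finite (SSt E T)" "finite (SSt E T')" using insert(1) finite_SSt by auto
    have "card (SSt (insert x E) T) \<le> card (SSt E T \<union> insert x ` SSt E T')"
      using sub fin by (intro card_mono) auto
    also have "\<dots> \<le> card (SSt E T) + card (insert x ` SSt E T')" by (rule card_Un_le)
    also have "\<dots> \<le> card (SSt E T) + card (SSt E T')" using card_image_le[OF fin(2)] by simp
    finally have c: "card (SSt (insert x E) T) \<le> card (SSt E T) + card (SSt E T')" .
    have "card (SSt (insert x E) T) * 4 ^ card (insert x E) \<le> (card (SSt E T) + card (SSt E T')) * (4 * 4 ^ ?N)"
      using mult_right_mono[OF c, of "4 ^ card (insert x E)"] cI by simp
    also have "\<dots> = 4 * (card (SSt E T) * 4 ^ ?N) + 4 * (card (SSt E T') * 4 ^ ?N)" by (simp add: algebra_simps)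
    also have "\<dots> \<le> 4 * (4 ^ T * 5 ^ ?N) + 4 * (4 ^ T' * 5 ^ ?N)"
      using insert.IH[of T] insert.IH[of T'] by (intro add_mono mult_left_mono) auto
    also have "\<dots> = 4 ^ T * 5 ^ card (insert x E)" using Suc cI by (simp add: algebra_simps)
    finally show ?thesis .
  qed
qed

lemma arith_final: fixes N D T :: nat
  assumes "2 \<le> N" "2 * 2 ^ N \<le> 3 * D" "D * 4 ^ N \<le> 4 ^ T * 5 ^ N"
  shows "N \<le> 8 * T"
proof (rule ccontr)
  assume "\<not> N \<le> 8 * T"
  then have T: "8 * T \<le> N" by simp
  have "2 * 2 ^ N * 4 ^ N \<le> 3 * D * 4 ^ N" using assms(2) by simp
  also have "\<dots> \<le> 3 * (4 ^ T * 5 ^ N)" using assms(3) by simp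
  finally have "2 * 8 ^ N \<le> (3 * 4 ^ T * 5 ^ N :: nat)"
    by (simp add: power_mult_distrib[symmetric] mult.assoc)
  then have P: "((2::nat) * 8 ^ N) ^ 8 \<le> (3 * 4 ^ T * 5 ^ N) ^ 8" by (rule power_mono) simp
  have sw: "\<And>a::nat. (a ^ N) ^ 8 = (a ^ 8) ^ N" by (metis power_mult mult.commute)
  have e1: "((2::nat) * 8 ^ N) ^ 8 = 256 * 16777216 ^ N"
    by (simp only: power_mult_distrib sw) simp
  have e2: "((3::nat) * 4 ^ T * 5 ^ N) ^ 8 = 6561 * (4 ^ T) ^ 8 * 390625 ^ N"
    by (simp only: power_mult_distrib sw) simp
  have "((4::nat) ^ T) ^ 8 \<le> 4 ^ N" using T by (simp add: power_mult[symmetric] mult.commute)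
  then have "6561 * (4 ^ T) ^ 8 * 390625 ^ N \<le> 6561 * 4 ^ N * (390625::nat) ^ N" by simp
  also have "\<dots> = 6561 * 1562500 ^ N" by (simp add: power_mult_distrib[symmetric])
  finally have A: "256 * (16777216::nat) ^ N \<le> 6561 * 1562500 ^ N" using P e1 e2 by linarith
  have "(16777216::nat) ^ N \<ge> (10 * 1562500) ^ N" by (rule power_mono) auto
  then have B: "(16777216::nat) ^ N \<ge> 10 ^ N * 1562500 ^ N" by (simp only: power_mult_distrib[symmetric])
  define x where "x = (1562500::nat) ^ N"
  have x0: "x > 0" unfolding x_def by simp
  have t: "(10::nat) ^ N \<ge> 100" using power_increasing[of 2 N "10::nat"] assms(1) by simp
  have "(100::nat) * x \<le> 10 ^ N * x" using t by (rule mult_le_mono1)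
  with B have C: "100 * x \<le> 16777216 ^ N" unfolding x_def by linarith
  from A have "256 * 16777216 ^ N \<le> 6561 * x" unfolding x_def .
  with C x0 show False by linarith
qed




lemma card_Eset: "card (Eset n) = (n div 2) * (n - n div 2)"
  unfolding Eset_def by (simp add: card_cartesian_product)

lemma final_arith: fixes n T :: nat
  assumes "4 \<le> n" "(n div 2) * (n - n div 2) \<le> 8 * T"
  shows "n\<^sup>2 \<le> 128 * T"
proof -
  define h where "h = n div 2"
  have h2: "2 \<le> h" using assms(1) unfolding h_def by simp
  have nh: "n \<le> 2 * h + 1" "h \<le> n - h" unfolding h_def by auto
  have "n\<^sup>2 \<le> (2 * h + 1)\<^sup>2" using nh(1) by (rule power_mono) simp
  also have "\<dots> = 4 * h * h + 4 * h + 1" by (simp add: power2_eq_square algebra_simps)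
  also have "\<dots> \<le> 16 * (h * h)"
  proof -
    have "h \<le> h * h" using h2 by simp
    then show ?thesis using h2 by linarith
  qed
  also have "\<dots> \<le> 16 * (h * (n - h))" using nh(2) by simp
  also have "\<dots> \<le> 16 * (8 * T)" using assms(2) unfolding h_def by simp
  finally show ?thesis by simp
qed

lemma main_bound:
  assumes n4: "4 \<le> n" and nM: "n < M" and a3: "\<alpha> < 3"
    and sol: "solves_metric_estimation n \<alpha> M m U0 Us out"
  shows "n\<^sup>2 \<le> 128 * length Us"
proof -
  define K where "K = qdim n M m"
  define T where "T = length Us"
  define E where "E = Eset n"
  define N where "N = card E"
  define Or where "Or Y = oracle_mat n M m (dY n Y)" for Y
  have m0: "0 < m" and U0: "unitary_of_dim K U0" and Us: "\<forall>U\<in>set Us. unitary_of_dim K U"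
    and succ: "\<And>d. is_nat_metric n M d \<Longrightarrow> success_prob n M m \<alpha> U0 Us out d \<ge> 2/3"
    using sol unfolding solves_metric_estimation_def K_def by auto
  have K0: "0 < K" unfolding K_def qdim_def using m0 n4 nM by simp
  have finE: "finite E" unfolding E_def Eset_def by simp
  have OK: "Or Y \<in> carrier_mat K K" for Y unfolding Or_def oracle_mat_def K_def by simp
  have UsK: "\<forall>U\<in>set Us. U \<in> carrier_mat K K" using Us unfolding unitary_of_dim_def by auto
  have U0K: "U0 \<in> carrier_mat K K" using U0 unfolding unitary_of_dim_def by auto
  define e0 :: "complex vec" where "e0 = unit_vec K 0"
  define v0 where "v0 = U0 *\<^sub>v e0"
  have e0K: "e0 \<in> carrier_vec K" unfolding e0_def by simp
  have v0K: "v0 \<in> carrier_vec K" unfolding v0_def using U0K e0K by (meson mult_mat_vec_carrier)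
  define \<phi>0 where "\<phi>0 k = v0 $ k" for k
  have "nrm K \<phi>0 = nrm K (act K U0 (\<lambda>i. e0 $ i))"
    unfolding nrm_def \<phi>0_def v0_def using mult_mat_vec_act[OF U0K e0K] by (intro sum.cong refl) auto
  also have "\<dots> = nrm K (\<lambda>i. e0 $ i)" using U0 unitary_entries by (intro act_norm) auto
  also have "\<dots> = (\<Sum>k<K. if k = 0 then 1 else 0)"
    unfolding nrm_def e0_def by (intro sum.cong refl) auto
  also have "\<dots> = 1" using K0 by simp
  finally have nrm0: "nrm K \<phi>0 = 1" .
  define \<psi> where "\<psi> Y = runF K (Or Y) Us \<phi>0" for Y
  have fs: "final_state n M m U0 Us (dY n Y) $ k = \<psi> Y k" if "k < K" for Y k
  proof -
    have "final_state n M m U0 Us (dY n Y) = run_after (Or Y) Us v0"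
      unfolding final_state_def Or_def v0_def e0_def K_def by simp
    then show ?thesis using run_after_runF[OF OK UsK v0K] that unfolding \<psi>_def \<phi>0_def by simp
  qed
  have nrmY: "nrm K (\<psi> Y) = 1" for Y
    unfolding \<psi>_def using runF_nrm[of K "Or Y" Us \<phi>0] oracle_entries Us nrm0 unfolding Or_def K_def by simp
  define SS where "SS = SSt E T"
  have finSS: "finite SS" unfolding SS_def using finE by (rule finite_SSt)
  have eq0: "(\<lambda>Y::(nat \<times> nat) set. \<phi>0) = (\<lambda>Y k. if {} \<subseteq> Y then \<phi>0 k else 0)" by simp
  have p0: "polyd (SSt (Eset n) 0) (\<lambda>Y. \<phi>0)"
    by (rule ssubst[of _ _ "polyd (SSt (Eset n) 0)", OF eq0]) (rule pterm, simp add: SSt_def)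
  have "polyd (SSt (Eset n) (0 + length Us)) (\<lambda>Y. runF (qdim n M m) (oracle_mat n M m (dY n Y)) Us \<phi>0)"
    by (rule prun[OF p0])
  then have pp: "polyd SS \<psi>" unfolding SS_def E_def T_def \<psi>_def Or_def K_def by simp
  obtain v where v: "\<And>Y k. \<psi> Y k = (\<Sum>S\<in>SS. if S \<subseteq> Y then v S k else 0)"
    using pexplicit[OF pp finSS] by blast
  obtain xs where xs: "set xs = SS" "distinct xs" using finite_distinct_list[OF finSS] by blast
  obtain C where C: "length C \<le> length (map v xs)" "orth K C"
    "\<forall>b\<in>set (map v xs). \<exists>a. \<forall>k<K. b k = (\<Sum>i<length C. a i * (C!i) k)"
    using gram_schmidt_ex by blast
  have lenC: "length C \<le> card SS" using C(1) xs distinct_card by fastforce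
  have "\<forall>S\<in>SS. \<exists>a. \<forall>k<K. v S k = (\<Sum>i<length C. a i * (C!i) k)" using C(3) xs by auto
  then obtain \<beta> where \<beta>: "\<And>S k. S \<in> SS \<Longrightarrow> k < K \<Longrightarrow> v S k = (\<Sum>i<length C. \<beta> S i * (C!i) k)"
    by metis
  have rep: "\<forall>k<K. \<psi> Y k = (\<Sum>i<length C. (\<Sum>S\<in>SS. if S \<subseteq> Y then \<beta> S i else 0) * (C!i) k)" for Y
  proof (intro allI impI)
    fix k assume k: "k < K"
    have "\<psi> Y k = (\<Sum>S\<in>SS. if S \<subseteq> Y then (\<Sum>i<length C. \<beta> S i * (C!i) k) else 0)"
      unfolding v using \<beta> k by (intro sum.cong refl) auto
    also have "\<dots> = (\<Sum>S\<in>SS. \<Sum>i<length C. (if S \<subseteq> Y then \<beta> S i else 0) * (C!i) k)"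
      by (intro sum.cong refl) auto
    also have "\<dots> = (\<Sum>i<length C. \<Sum>S\<in>SS. (if S \<subseteq> Y then \<beta> S i else 0) * (C!i) k)"
      by (rule sum.swap)
    also have "\<dots> = (\<Sum>i<length C. (\<Sum>S\<in>SS. if S \<subseteq> Y then \<beta> S i else 0) * (C!i) k)"
      by (simp add: sum_distrib_right)
    finally show "\<psi> Y k = (\<Sum>i<length C. (\<Sum>S\<in>SS. if S \<subseteq> Y then \<beta> S i else 0) * (C!i) k)" .
  qed
  have ptY: "(cmod (\<psi> Y k))\<^sup>2 \<le> wt K C k" if "k < K" for Y k
    using pt_bound[OF C(2) rep that, of Y] nrmY by simp
  define A where "A Y = {k. k < K \<and> good_estimate n \<alpha> (dY n Y) (out k)}" for Y
  have M3: "3 < M" using n4 nM by simp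
  have succY: "2/3 \<le> (\<Sum>k\<in>A Y. wt K C k)" for Y
  proof -
    have "2/3 \<le> success_prob n M m \<alpha> U0 Us out (dY n Y)" using succ dY_metric[OF M3] by blast
    also have "success_prob n M m \<alpha> U0 Us out (dY n Y) =
               (\<Sum>k<K. if good_estimate n \<alpha> (dY n Y) (out k) then (cmod (\<psi> Y k))\<^sup>2 else 0)"
      unfolding success_prob_def Let_def K_def[symmetric] using fs by (intro sum.cong refl) auto
    also have "\<dots> \<le> (\<Sum>k<K. if good_estimate n \<alpha> (dY n Y) (out k) then wt K C k else 0)"
      using ptY by (intro sum_mono) auto
    also have "\<dots> = (\<Sum>k\<in>A Y. wt K C k)"
      unfolding A_def by (simp add: sum.inter_filter[symmetric] lessThan_def)
    finally show ?thesis .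
  qed
  have disj: "\<forall>Y\<in>Pow E. \<forall>Y'\<in>Pow E. Y \<noteq> Y' \<longrightarrow> A Y \<inter> A Y' = {}"
    unfolding A_def E_def using dY_decode[OF _ _ a3] by blast
  have finA: "\<forall>Y\<in>Pow E. finite (A Y)" unfolding A_def by simp
  have "real (card (Pow E)) * (2/3) = (\<Sum>Y\<in>Pow E. 2/3)" by simp
  also have "\<dots> \<le> (\<Sum>Y\<in>Pow E. \<Sum>k\<in>A Y. wt K C k)" using succY by (intro sum_mono) auto
  also have "\<dots> = (\<Sum>k\<in>(\<Union>Y\<in>Pow E. A Y). wt K C k)"
    using finE finA disj by (intro sum.UNION_disjoint[symmetric]) auto
  also have "\<dots> \<le> (\<Sum>k<K. wt K C k)"
    by (intro sum_mono2) (auto simp: A_def wt_nonneg)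
  also have "\<dots> = real (length C)" by (rule wt_sum[OF C(2)])
  also have "\<dots> \<le> real (card SS)" using lenC by simp
  finally have "real (2 ^ N) * (2/3) \<le> real (card SS)" unfolding N_def using finE by (simp add: card_Pow)
  then have "real (2 * 2 ^ N) \<le> real (3 * card SS)" by simp
  then have c1: "2 * 2 ^ N \<le> 3 * card SS" by (simp only: of_nat_le_iff)
  have c2: "card SS * 4 ^ N \<le> 4 ^ T * 5 ^ N" unfolding SS_def N_def by (rule card_SSt[OF finE])
  have NE: "N = (n div 2) * (n - n div 2)" unfolding N_def E_def by (rule card_Eset)
  have h1: "2 \<le> n div 2" "2 \<le> n - n div 2" using n4 by auto
  have "2 * 2 \<le> (n div 2) * (n - n div 2)" by (rule mult_le_mono[OF h1])
  then have N2: "2 \<le> N" unfolding NE by simp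
  have "N \<le> 8 * T" by (rule arith_final[OF N2 c1 c2])
  then have "(n div 2) * (n - n div 2) \<le> 8 * length Us" using NE T_def by simp
  then show ?thesis by (rule final_arith[OF n4])
qed

theorem mainTheorem5:
  fixes \<alpha> :: real
  assumes "1 < \<alpha>" and "\<alpha> < 3"
  shows "\<exists>c>0. \<exists>N. \<forall>n\<ge>N. \<forall>M m U0 Us out.
           n < M \<and> solves_metric_estimation n \<alpha> M m U0 Us out \<longrightarrow>
           real (length Us) \<ge> c * real n ^ 2"
proof (intro exI[of _ "1/128"] conjI exI[of _ 4] allI impI)
  fix n M m U0 Us out
  assume n: "4 \<le> n" and h: "n < M \<and> solves_metric_estimation n \<alpha> M m U0 Us out"
  have "n\<^sup>2 \<le> 128 * length Us" using main_bound[OF n _ assms(2)] h by blast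
  then have "real (n\<^sup>2) \<le> real (128 * length Us)" by (simp only: of_nat_le_iff)
  then show "real (length Us) \<ge> 1/128 * real n ^ 2" by simp
qed simp

end
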